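(* Let $G$ be a groupoid (a small category in which every morphism is an isomorphism) and let $X$ be a set equipped with a partial function ${\rm mor}(G)\times X\to X$, $(g,x)\mapsto g\cdot x$ where defined. Then this is a partial category action, i.e. satisfies (C1)–(C3) below, if and only if it is a partial groupoid action, i.e. satisfies (GR1)–(GR3) below.
   Context: Conventions: objects are identified with their identity morphisms, so ${\rm ob}(G)\subseteq{\rm mor}(G)$; $d(g), c(g)$ are domain and codomain, $G^2=\{(g,h)\mid d(g)=c(h)\}$, and $g^{-1}$ is the inverse of $g$. Axioms: (C1) = (GR1): for every $x\in X$ there is $e\in{\rm ob}(G)$ with $e\cdot x$ defined, and whenever $f\in{\rm ob}(G)$ and $f\cdot x$ is defined, $f\cdot x = x$. (C2): if $g\cdot x$ is defined then $d(g)\cdot x$ is defined. (C3): if $(g,h)\in G^2$ and $h\cdot x$ is defined, then $(gh)\cdot x$ is defined iff $g\cdot(h\cdot x)$ is defined, and then they are equal. (GR2): if $g\cdot x$ is defined then $g^{-1}\cdot(g\cdot x)$ is defined and equals $x$. (GR3): if $(g,h)\in G^2$ and $g\cdot(h\cdot x)$ is defined, then $(gh)\cdot x$ is defined and equals $g\cdot(h\cdot x)$. *)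

theory Defs
  imports Main
begin

text \<open>A groupoid with morphism set M, object set Ob (objects identified with their
identity morphisms, Ob \<subseteq> M), domain dm, codomain cd, composition cmp g h = g h
(meaningful when dm g = cd h) and inverse iv.\<close>

definition groupoid ::
  "'g set \<Rightarrow> 'g set \<Rightarrow> ('g \<Rightarrow> 'g) \<Rightarrow> ('g \<Rightarrow> 'g) \<Rightarrow> ('g \<Rightarrow> 'g \<Rightarrow> 'g) \<Rightarrow> ('g \<Rightarrow> 'g) \<Rightarrow> bool"
where
  "groupoid M Ob dm cd cmp iv \<longleftrightarrow>
     Ob \<subseteq> M \<and>
     (\<forall>g\<in>M. dm g \<in> Ob \<and> cd g \<in> Ob) \<and>
     (\<forall>e\<in>Ob. dm e = e \<and> cd e = e) \<and>
     (\<forall>g\<in>M. \<forall>h\<in>M. dm g = cd h \<longrightarrow>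
        cmp g h \<in> M \<and> dm (cmp g h) = dm h \<and> cd (cmp g h) = cd g) \<and>
     (\<forall>f\<in>M. \<forall>g\<in>M. \<forall>h\<in>M. dm f = cd g \<longrightarrow> dm g = cd h \<longrightarrow>
        cmp (cmp f g) h = cmp f (cmp g h)) \<and>
     (\<forall>g\<in>M. cmp g (dm g) = g \<and> cmp (cd g) g = g) \<and>
     (\<forall>g\<in>M. iv g \<in> M \<and> dm (iv g) = cd g \<and> cd (iv g) = dm g \<and>
        cmp g (iv g) = cd g \<and> cmp (iv g) g = dm g)"

text \<open>A partial function mor(G) \<times> X \<rightarrow> X, encoded as act g x = Some (g\<cdot>x) when defined.\<close>

definition partial_map_on ::
  "'g set \<Rightarrow> 'x set \<Rightarrow> ('g \<Rightarrow> 'x \<Rightarrow> 'x option) \<Rightarrow> bool" where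
  "partial_map_on M X act \<longleftrightarrow>
     (\<forall>g x y. act g x = Some y \<longrightarrow> g \<in> M \<and> x \<in> X \<and> y \<in> X)"

abbreviation defd :: "('g \<Rightarrow> 'x \<Rightarrow> 'x option) \<Rightarrow> 'g \<Rightarrow> 'x \<Rightarrow> bool" where
  "defd act g x \<equiv> act g x \<noteq> None"

definition defd2 :: "('g \<Rightarrow> 'x \<Rightarrow> 'x option) \<Rightarrow> 'g \<Rightarrow> 'g \<Rightarrow> 'x \<Rightarrow> bool" where
  "defd2 act g h x \<longleftrightarrow> (\<exists>y. act h x = Some y \<and> act g y \<noteq> None)"

text \<open>(C1) = (GR1)\<close>
definition ax_C1 where
  "ax_C1 Ob X act \<longleftrightarrow>
     (\<forall>x\<in>X. (\<exists>e\<in>Ob. defd act e x) \<and> (\<forall>f\<in>Ob. defd act f x \<longrightarrow> act f x = Some x))"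

definition ax_C2 where
  "ax_C2 M dm X act \<longleftrightarrow>
     (\<forall>g\<in>M. \<forall>x\<in>X. defd act g x \<longrightarrow> defd act (dm g) x)"

definition ax_C3 where
  "ax_C3 M dm cd cmp X act \<longleftrightarrow>
     (\<forall>g\<in>M. \<forall>h\<in>M. \<forall>x\<in>X. dm g = cd h \<longrightarrow> defd act h x \<longrightarrow>
        ((defd act (cmp g h) x \<longleftrightarrow> defd2 act g h x) \<and>
         (defd act (cmp g h) x \<longrightarrow> act (cmp g h) x = act g (the (act h x)))))"

definition ax_GR2 where
  "ax_GR2 M iv X act \<longleftrightarrow>
     (\<forall>g\<in>M. \<forall>x\<in>X. defd act g x \<longrightarrow> act (iv g) (the (act g x)) = Some x)"

definition ax_GR3 where
  "ax_GR3 M dm cd cmp X act \<longleftrightarrow>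
     (\<forall>g\<in>M. \<forall>h\<in>M. \<forall>x\<in>X. dm g = cd h \<longrightarrow> defd2 act g h x \<longrightarrow>
        act (cmp g h) x = act g (the (act h x)))"

definition partial_category_action where
  "partial_category_action M Ob dm cd cmp X act \<longleftrightarrow>
     ax_C1 Ob X act \<and> ax_C2 M dm X act \<and> ax_C3 M dm cd cmp X act"

definition partial_groupoid_action where
  "partial_groupoid_action M Ob dm cd cmp iv X act \<longleftrightarrow>
     ax_C1 Ob X act \<and> ax_GR2 M iv X act \<and> ax_GR3 M dm cd cmp X act"

end

theory Submission
  imports Defs
begin

theorem proposition4p2:
  fixes M Ob :: "'g set" and dm cd iv :: "'g \<Rightarrow> 'g" and cmp :: "'g \<Rightarrow> 'g \<Rightarrow> 'g"
    and X :: "'x set" and act :: "'g \<Rightarrow> 'x \<Rightarrow> 'x option"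
  assumes "groupoid M Ob dm cd cmp iv"
    and "partial_map_on M X act"
  shows "partial_category_action M Ob dm cd cmp X act \<longleftrightarrow>
         partial_groupoid_action M Ob dm cd cmp iv X act"
proof -
  note G = assms(1)[unfolded groupoid_def]
  have obM: "Ob \<subseteq> M" and dmcd: "\<And>g. g \<in> M \<Longrightarrow> dm g \<in> Ob \<and> cd g \<in> Ob"
    and cmpM: "\<And>g h. g \<in> M \<Longrightarrow> h \<in> M \<Longrightarrow> dm g = cd h \<Longrightarrow>
        cmp g h \<in> M \<and> dm (cmp g h) = dm h \<and> cd (cmp g h) = cd g"
    and assoc: "\<And>f g h. f \<in> M \<Longrightarrow> g \<in> M \<Longrightarrow> h \<in> M \<Longrightarrow> dm f = cd g \<Longrightarrow> dm g = cd h \<Longrightarrow>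
        cmp (cmp f g) h = cmp f (cmp g h)"
    and unit: "\<And>g. g \<in> M \<Longrightarrow> cmp g (dm g) = g \<and> cmp (cd g) g = g"
    and inv: "\<And>g. g \<in> M \<Longrightarrow> iv g \<in> M \<and> dm (iv g) = cd g \<and> cd (iv g) = dm g \<and>
        cmp g (iv g) = cd g \<and> cmp (iv g) g = dm g"
    using G by blast+
  have PM: "\<And>g x y. act g x = Some y \<Longrightarrow> g \<in> M \<and> x \<in> X \<and> y \<in> X"
    using assms(2) unfolding partial_map_on_def by blast
  show ?thesis
  proof
    assume A: "partial_category_action M Ob dm cd cmp X act"
    have C1: "ax_C1 Ob X act" and C2: "ax_C2 M dm X act" and C3: "ax_C3 M dm cd cmp X act"
      using A unfolding partial_category_action_def by auto
    have GR2: "ax_GR2 M iv X act" unfolding ax_GR2_def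
    proof (intro ballI impI)
      fix g x assume g: "g \<in> M" and x: "x \<in> X" and d: "defd act g x"
      then obtain y where y: "act g x = Some y" by auto
      have "defd act (dm g) x" using C2 g x d unfolding ax_C2_def by blast
      hence e: "act (dm g) x = Some x" using C1 x dmcd[OF g] unfolding ax_C1_def by blast
      have i: "iv g \<in> M" "dm (iv g) = cd g" "cmp (iv g) g = dm g" using inv[OF g] by auto
      have "defd2 act (iv g) g x" and "act (cmp (iv g) g) x = act (iv g) (the (act g x))"
        using C3 i g x d e unfolding ax_C3_def by (metis option.distinct(1))+
      thus "act (iv g) (the (act g x)) = Some x" using e i by simp
    qed
    have GR3: "ax_GR3 M dm cd cmp X act" using C3 unfolding ax_C3_def ax_GR3_def defd2_def
      by (metis option.distinct(1))
    show "partial_groupoid_action M Ob dm cd cmp iv X act"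
      using C1 GR2 GR3 unfolding partial_groupoid_action_def by blast
  next
    assume A: "partial_groupoid_action M Ob dm cd cmp iv X act"
    have C1: "ax_C1 Ob X act" and GR2: "ax_GR2 M iv X act" and GR3: "ax_GR3 M dm cd cmp X act"
      using A unfolding partial_groupoid_action_def by auto
    have C2: "ax_C2 M dm X act" unfolding ax_C2_def
    proof (intro ballI impI)
      fix g x assume g: "g \<in> M" and x: "x \<in> X" and d: "defd act g x"
      then obtain y where y: "act g x = Some y" by auto
      have iy: "act (iv g) y = Some x" using GR2 g x d y unfolding ax_GR2_def by force
      have i: "iv g \<in> M" "dm (iv g) = cd g" "cmp (iv g) g = dm g" using inv[OF g] by auto
      have "defd2 act (iv g) g x" unfolding defd2_def using y iy by simp
      hence "act (cmp (iv g) g) x = act (iv g) (the (act g x))"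
        using GR3 i g x unfolding ax_GR3_def by blast
      thus "defd act (dm g) x" using i y iy by simp
    qed
    have C3: "ax_C3 M dm cd cmp X act" unfolding ax_C3_def
    proof (intro ballI impI)
      fix g h x assume g: "g \<in> M" and h: "h \<in> M" and x: "x \<in> X" and gh: "dm g = cd h"
        and d: "defd act h x"
      then obtain y where y: "act h x = Some y" by auto
      have yX: "y \<in> X" using PM[OF y] by blast
      have iy: "act (iv h) y = Some x" using GR2 h x d y unfolding ax_GR2_def by force
      have ih: "iv h \<in> M" "dm (iv h) = cd h" "cd (iv h) = dm h" "cmp h (iv h) = cd h"
        using inv[OF h] by auto
      have c: "cmp g h \<in> M" "dm (cmp g h) = dm h" using cmpM[OF g h gh] by auto
      have bk: "defd2 act g h x" if dc: "defd act (cmp g h) x"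
      proof -
        have "defd2 act (cmp g h) (iv h) y" unfolding defd2_def using iy dc by simp
        hence "act (cmp (cmp g h) (iv h)) y = act (cmp g h) (the (act (iv h) y))"
          using GR3 c ih yX unfolding ax_GR3_def by simp
        moreover have "cmp (cmp g h) (iv h) = g"
          using assoc[OF g h ih(1) gh] ih gh unit[OF g] by simp
        ultimately have "act g y = act (cmp g h) x" using iy by simp
        thus ?thesis unfolding defd2_def using y dc by simp
      qed
      have fwd: "defd2 act g h x \<Longrightarrow> act (cmp g h) x = act g (the (act h x))"
        using GR3 g h x gh unfolding ax_GR3_def by blast
      have "defd2 act g h x \<Longrightarrow> defd act (cmp g h) x"
        using fwd y unfolding defd2_def by auto
      thus "(defd act (cmp g h) x \<longleftrightarrow> defd2 act g h x) \<and>
         (defd act (cmp g h) x \<longrightarrow> act (cmp g h) x = act g (the (act h x)))"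
        using bk fwd by blast
    qed
    show "partial_category_action M Ob dm cd cmp X act"
      using C1 C2 C3 unfolding partial_category_action_def by blast
  qed
qed

end
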